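(* Let $R$ be a principal ideal domain, let $P$ be a lattice with a compatible abelian group structure, and let $O\subseteq P$. Assume there exists $a\in O$ such that no element of $V_a\cap O$ is a minimal element of $O$, where $V_a=\{x\in P: x\le a\}$. Let $M=\bigoplus_{i\in P}M_i$ be a $P$-graded $R[U_0]$-module such that $M_i$ is a nonzero free $R$-module of finite rank for $i\in O$ and $M_i=0$ for $i\notin O$. Then $M$ is not graded projective.
   Context: A lattice is a poset in which any two elements have a join and a meet; a compatible abelian group structure means $(P,+,0)$ is an abelian group with $a\le b\Rightarrow a+c\le b+c$. $U_0=\{s\in P: s\ge 0\}$ and $R[U_0]$ is the monoid ring of finite sums $\sum_{s\in U_0}c_st^s$ ($c_s\in R$), graded by $\deg(ct^s)=s$; a $P$-graded $R[U_0]$-module is the same as a persistence module over $R$ indexed by $P$. A minimal element of $O$ is $m\in O$ such that no $s\in O$ satisfies $s<m$. Graded projective means a graded direct summand of a graded free $R[U_0]$-module. *)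

theory Defs
  imports Complex_Main
begin

definition is_ideal :: "'r::comm_ring_1 set \<Rightarrow> bool" where
  "is_ideal I \<longleftrightarrow> 0 \<in> I \<and> (\<forall>x\<in>I. \<forall>y\<in>I. x + y \<in> I) \<and> (\<forall>r. \<forall>x\<in>I. r * x \<in> I)"

definition pid :: "'r::idom itself \<Rightarrow> bool" where
  "pid _ \<longleftrightarrow> (\<forall>I::'r set. is_ideal I \<longrightarrow> (\<exists>a. I = {a * x | x. True}))"

definition minimal_in :: "'p::order set \<Rightarrow> 'p \<Rightarrow> bool" where
  "minimal_in S m \<longleftrightarrow> m \<in> S \<and> \<not> (\<exists>s\<in>S. s < m)"

text \<open>A P-graded R[U_0]-module, presented as a persistence module over R indexed by P:
  components Mc i (R-submodules of an ambient R-module with scalar action sc) and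
  structure maps phi i j : Mc i -> Mc j for i \<le> j (multiplication by t^(j-i)).\<close>
definition persistence_module ::
  "('r::comm_ring_1 \<Rightarrow> 'm::ab_group_add \<Rightarrow> 'm) \<Rightarrow> ('p::order \<Rightarrow> 'm set) \<Rightarrow> ('p \<Rightarrow> 'p \<Rightarrow> 'm \<Rightarrow> 'm) \<Rightarrow> bool" where
  "persistence_module sc Mc phi \<longleftrightarrow>
     module sc \<and>
     (\<forall>i. module.subspace sc (Mc i)) \<and>
     (\<forall>i j. i \<le> j \<longrightarrow>
        (\<forall>x\<in>Mc i. phi i j x \<in> Mc j) \<and>
        (\<forall>x\<in>Mc i. \<forall>y\<in>Mc i. phi i j (x + y) = phi i j x + phi i j y) \<and>
        (\<forall>r. \<forall>x\<in>Mc i. phi i j (sc r x) = sc r (phi i j x))) \<and>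
     (\<forall>i. \<forall>x\<in>Mc i. phi i i x = x) \<and>
     (\<forall>i j k. i \<le> j \<longrightarrow> j \<le> k \<longrightarrow> (\<forall>x\<in>Mc i. phi j k (phi i j x) = phi i k x))"

definition free_finite_rank :: "('r::comm_ring_1 \<Rightarrow> 'm::ab_group_add \<Rightarrow> 'm) \<Rightarrow> 'm set \<Rightarrow> bool" where
  "free_finite_rank sc N \<longleftrightarrow>
     (\<exists>B. finite B \<and> B \<subseteq> N \<and> \<not> module.dependent sc B \<and> module.span sc B = N)"

text \<open>Degree-j component of the graded free R[U_0]-module with homogeneous basis G,
  basis element g of degree deg g: the free R-module on {g \<in> G. deg g \<le> j},
  realised as finitely supported coefficient functions; the structure maps are inclusions.\<close>
definition free_comp :: "'g set \<Rightarrow> ('g \<Rightarrow> 'p::order) \<Rightarrow> 'p \<Rightarrow> ('g \<Rightarrow> 'r::comm_ring_1) set" where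
  "free_comp G deg j = {f. finite {g. f g \<noteq> 0} \<and> (\<forall>g. f g \<noteq> 0 \<longrightarrow> g \<in> G \<and> deg g \<le> j)}"

text \<open>Graded projective: (isomorphic to) a graded direct summand of a graded free
  R[U_0]-module, i.e. there are degree-preserving R[U_0]-linear maps
  iota : M -> F and pi : F -> M with pi o iota = id.\<close>
definition graded_projective ::
  "'g itself \<Rightarrow> ('r::comm_ring_1 \<Rightarrow> 'm::ab_group_add \<Rightarrow> 'm) \<Rightarrow> ('p::order \<Rightarrow> 'm set) \<Rightarrow> ('p \<Rightarrow> 'p \<Rightarrow> 'm \<Rightarrow> 'm) \<Rightarrow> bool" where
  "graded_projective _ sc Mc phi \<longleftrightarrow>
     (\<exists>(G::'g set) (deg::'g \<Rightarrow> 'p) (\<iota>::'p \<Rightarrow> 'm \<Rightarrow> ('g \<Rightarrow> 'r)) (\<pi>::'p \<Rightarrow> ('g \<Rightarrow> 'r) \<Rightarrow> 'm).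
        (\<forall>j. \<forall>x\<in>Mc j. \<iota> j x \<in> free_comp G deg j) \<and>
        (\<forall>j. \<forall>x\<in>Mc j. \<forall>y\<in>Mc j. \<iota> j (x + y) = (\<lambda>g. \<iota> j x g + \<iota> j y g)) \<and>
        (\<forall>j r. \<forall>x\<in>Mc j. \<iota> j (sc r x) = (\<lambda>g. r * \<iota> j x g)) \<and>
        (\<forall>i j. i \<le> j \<longrightarrow> (\<forall>x\<in>Mc i. \<iota> j (phi i j x) = \<iota> i x)) \<and>
        (\<forall>j. \<forall>f\<in>free_comp G deg j. \<pi> j f \<in> Mc j) \<and>
        (\<forall>j. \<forall>f\<in>free_comp G deg j. \<forall>h\<in>free_comp G deg j. \<pi> j (\<lambda>g. f g + h g) = \<pi> j f + \<pi> j h) \<and>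
        (\<forall>j r. \<forall>f\<in>free_comp G deg j. \<pi> j (\<lambda>g. r * f g) = sc r (\<pi> j f)) \<and>
        (\<forall>i j. i \<le> j \<longrightarrow> (\<forall>f\<in>free_comp G deg i. \<pi> j f = phi i j (\<pi> i f))) \<and>
        (\<forall>j. \<forall>x\<in>Mc j. \<pi> j (\<iota> j x) = x))"

end

theory Submission
  imports Defs
begin

theorem lemma5p1:
  fixes sc :: "'r::idom \<Rightarrow> 'm::ab_group_add \<Rightarrow> 'm"
    and Mc :: "'p::{lattice, ordered_ab_group_add} \<Rightarrow> 'm set"
    and phi :: "'p \<Rightarrow> 'p \<Rightarrow> 'm \<Rightarrow> 'm"
    and Ob :: "'p set"
  assumes "pid TYPE('r)"
    and "\<exists>a\<in>Ob. \<forall>x\<in>Ob. x \<le> a \<longrightarrow> \<not> minimal_in Ob x"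
    and "persistence_module sc Mc phi"
    and "\<forall>i\<in>Ob. free_finite_rank sc (Mc i) \<and> Mc i \<noteq> {0}"
    and "\<forall>i. i \<notin> Ob \<longrightarrow> Mc i = {0}"
  shows "\<not> graded_projective TYPE('g) sc Mc phi"
proof
  assume "graded_projective TYPE('g) sc Mc phi"
  then obtain G :: "'g set" and deg :: "'g \<Rightarrow> 'p" and iota :: "'p \<Rightarrow> 'm \<Rightarrow> 'g \<Rightarrow> 'r" and pi :: "'p \<Rightarrow> ('g \<Rightarrow> 'r) \<Rightarrow> 'm" where
    h1: "(\<forall>j. \<forall>x\<in>Mc j. iota j x \<in> free_comp G deg j)" and
    h2: "(\<forall>j. \<forall>x\<in>Mc j. \<forall>y\<in>Mc j. iota j (x + y) = (\<lambda>g. iota j x g + iota j y g))" and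
    h3: "(\<forall>j r. \<forall>x\<in>Mc j. iota j (sc r x) = (\<lambda>g. r * iota j x g))" and
    h4: "(\<forall>i j. i \<le> j \<longrightarrow> (\<forall>x\<in>Mc i. iota j (phi i j x) = iota i x))" and
    h5: "(\<forall>j. \<forall>f\<in>free_comp G deg j. pi j f \<in> Mc j)" and
    h6: "(\<forall>j. \<forall>f\<in>free_comp G deg j. \<forall>h\<in>free_comp G deg j. pi j (\<lambda>g. f g + h g) = pi j f + pi j h)" and
    h7: "(\<forall>j r. \<forall>f\<in>free_comp G deg j. pi j (\<lambda>g. r * f g) = sc r (pi j f))" and
    h8: "(\<forall>i j. i \<le> j \<longrightarrow> (\<forall>f\<in>free_comp G deg i. pi j f = phi i j (pi i f)))" and
    h9: "(\<forall>j. \<forall>x\<in>Mc j. pi j (iota j x) = x)"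
    unfolding graded_projective_def apply (elim exE conjE) apply (rule that) apply assumption+ done
  have i1: "\<And>j x. x\<in>Mc j \<Longrightarrow> iota j x \<in> free_comp G deg j" using h1 by blast
  have i2: "\<And>j x y. x\<in>Mc j \<Longrightarrow> y\<in>Mc j \<Longrightarrow> iota j (x + y) = (\<lambda>g. iota j x g + iota j y g)" using h2 by blast
  have i3: "\<And>j r x. x\<in>Mc j \<Longrightarrow> iota j (sc r x) = (\<lambda>g. r * iota j x g)" using h3 by blast
  have i4: "\<And>i j x. i \<le> j \<Longrightarrow> x\<in>Mc i \<Longrightarrow> iota j (phi i j x) = iota i x" using h4 by blast
  have p1: "\<And>j f. f\<in>free_comp G deg j \<Longrightarrow> pi j f \<in> Mc j" using h5 by blast
  have p2: "\<And>j f h. f\<in>free_comp G deg j \<Longrightarrow> h\<in>free_comp G deg j \<Longrightarrow> pi j (\<lambda>g. f g + h g) = pi j f + pi j h" using h6 by blast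
  have p4: "\<And>i j f. i \<le> j \<Longrightarrow> f\<in>free_comp G deg i \<Longrightarrow> pi j f = phi i j (pi i f)" using h8 by blast
  have p5: "\<And>j x. x\<in>Mc j \<Longrightarrow> pi j (iota j x) = x" using h9 by blast
  have PM: "module sc \<and> (\<forall>i. module.subspace sc (Mc i)) \<and>
     (\<forall>i j. i \<le> j \<longrightarrow>
        (\<forall>x\<in>Mc i. phi i j x \<in> Mc j) \<and>
        (\<forall>x\<in>Mc i. \<forall>y\<in>Mc i. phi i j (x + y) = phi i j x + phi i j y) \<and>
        (\<forall>r. \<forall>x\<in>Mc i. phi i j (sc r x) = sc r (phi i j x)))"
    using assms(3) unfolding persistence_module_def by (elim conjE; intro conjI)
  have pm: "module sc" using PM by (rule conjunct1)
  have sub: "\<And>i. module.subspace sc (Mc i)" using PM by simp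
  have ph: "\<And>i j x. i \<le> j \<Longrightarrow> x \<in> Mc i \<Longrightarrow> phi i j x \<in> Mc j" using PM by simp
  have phadd: "\<And>i j x y. i \<le> j \<Longrightarrow> x \<in> Mc i \<Longrightarrow> y \<in> Mc i \<Longrightarrow> phi i j (x + y) = phi i j x + phi i j y"
    using PM by simp
  have zero: "\<And>i. 0 \<in> Mc i" using module.subspace_0[OF pm sub] by simp
  have addM: "\<And>i x y. x \<in> Mc i \<Longrightarrow> y \<in> Mc i \<Longrightarrow> x + y \<in> Mc i"
    using module.subspace_add[OF pm sub] by simp
  have scM: "\<And>i c x. x \<in> Mc i \<Longrightarrow> sc c x \<in> Mc i"
    using module.subspace_scale[OF pm sub] by simp
  have iota0: "\<And>j. iota j 0 = (\<lambda>g. 0)"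
  proof -
    fix j
    have "iota j (0 + 0) = (\<lambda>g. iota j 0 g + iota j 0 g)" using i2 zero by blast
    then show "iota j 0 = (\<lambda>g. 0)" proof (intro ext) fix g show "iota j 0 g = 0" using fun_cong[OF \<open>iota j (0 + 0) = _\<close>, of g] by (metis add.right_neutral add_left_cancel) qed
  qed
  have fc0: "\<And>j. (\<lambda>g. 0) \<in> free_comp G deg j" by (simp add: free_comp_def)
  have pi0: "\<And>j. pi j (\<lambda>g. 0) = 0"
  proof -
    fix j
    have "pi j (\<lambda>g. 0 + 0) = pi j (\<lambda>g. 0) + pi j (\<lambda>g. 0)" using p2 fc0 by blast
    then show "pi j (\<lambda>g. 0) = 0" by simp
  qed
  have phi0: "\<And>i j. i \<le> j \<Longrightarrow> phi i j 0 = 0"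
  proof -
    fix i j :: 'p assume "i \<le> j"
    then have "phi i j (0 + 0) = phi i j 0 + phi i j 0" using phadd zero by blast
    then show "phi i j 0 = 0" by simp
  qed
  define supp where "supp f = {g. f g \<noteq> (0::'r)}" for f :: "'g \<Rightarrow> 'r"
  obtain a where aO: "a \<in> Ob" and anm: "\<forall>x\<in>Ob. x \<le> a \<longrightarrow> \<not> minimal_in Ob x"
    using assms(2) by blast
  obtain B where Bfin: "finite B" and BM: "B \<subseteq> Mc a" and Bspan: "module.span sc B = Mc a"
    using assms(4) aO unfolding free_finite_rank_def by blast
  define S where "S = (\<Union>b\<in>B. supp (iota a b))"
  have Sfin: "finite S"
    unfolding S_def supp_def using Bfin i1 BM by (auto simp: free_comp_def)
  have suppS: "x \<in> Mc a \<and> supp (iota a x) \<subseteq> S" if "x \<in> module.span sc B" for x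
  proof (rule module.span_induct_alt[OF pm that])
    show "0 \<in> Mc a \<and> supp (iota a 0) \<subseteq> S" using zero iota0 by (simp add: supp_def)
  next
    fix c x y
    assume x1: "x \<in> B" and y1: "y \<in> Mc a \<and> supp (iota a y) \<subseteq> S"
    have xM: "x \<in> Mc a" using x1 BM by blast
    have e: "iota a (sc c x + y) = (\<lambda>g. c * iota a x g + iota a y g)"
      using i2[OF scM[OF xM] conjunct1[OF y1]] i3[OF xM] by simp
    have "supp (iota a x) \<subseteq> S" using x1 unfolding S_def by blast
    note xS = this
    have "sc c x + y \<in> Mc a" using y1 addM scM xM by blast
    moreover have "supp (iota a (sc c x + y)) \<subseteq> S"
    proof
      fix g assume "g \<in> supp (iota a (sc c x + y))"
      then have "c * iota a x g + iota a y g \<noteq> 0" using e unfolding supp_def by simp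
      then have "g \<in> supp (iota a x) \<or> g \<in> supp (iota a y)" unfolding supp_def by auto
      then show "g \<in> S" using xS y1 by blast
    qed
    ultimately show "sc c x + y \<in> Mc a \<and> supp (iota a (sc c x + y)) \<subseteq> S" by blast
  qed
  define Sc where "Sc c = {g \<in> S. deg g \<le> c}" for c
  have Sc_ne: "Sc c \<noteq> {}" if "c \<in> Ob" "c \<le> a" for c
  proof -
    have "Mc c \<noteq> {0}" using assms(4) that(1) by blast
    then obtain y where yM: "y \<in> Mc c" and y0: "y \<noteq> 0" using zero by blast
    have e: "iota c y = iota a (phi c a y)" using i4[OF that(2) yM] by simp
    have "phi c a y \<in> Mc a" using ph[OF that(2) yM] .
    then have "supp (iota a (phi c a y)) \<subseteq> S" using suppS Bspan by blast
    then have s1: "supp (iota c y) \<subseteq> S" using e by simp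
    have s2: "\<forall>g \<in> supp (iota c y). deg g \<le> c" using i1[OF yM] unfolding free_comp_def supp_def by auto
    show ?thesis
    proof
      assume "Sc c = {}"
      then have "supp (iota c y) = {}" using s1 s2 unfolding Sc_def by blast
      then have "iota c y = (\<lambda>g. 0)" unfolding supp_def by auto
      then have "y = 0" using p5[OF yM] pi0 by simp
      then show False using y0 by simp
    qed
  qed
  define C where "C = {c \<in> Ob. c \<le> a}"
  have "C \<noteq> {}" using aO C_def by blast
  then obtain c where cC: "c \<in> C" and cmin: "\<And>c'. c' \<in> C \<Longrightarrow> card (Sc c) \<le> card (Sc c')"
    using ex_has_least_nat[of "\<lambda>c. c \<in> C" _ "\<lambda>c. card (Sc c)"] by blast
  have cO: "c \<in> Ob" and ca: "c \<le> a" using cC C_def by auto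
  have Scfin: "\<And>c. finite (Sc c)" using Sfin unfolding Sc_def by auto
  define d where "d = Sup_fin (deg ` Sc c)"
  have dcb: "\<And>g. g \<in> Sc c \<Longrightarrow> deg g \<le> d" unfolding d_def
    using Scfin by (simp add: Sup_fin.coboundedI)
  have dc: "d \<le> c" unfolding d_def using Scfin Sc_ne[OF cO ca]
    by (auto intro!: Sup_fin.boundedI simp: Sc_def)
  have dO: "d \<in> Ob"
  proof (rule ccontr)
    assume "d \<notin> Ob"
    then have Md: "Mc d = {0}" using assms(5) by blast
    have "Mc c \<noteq> {0}" using assms(4) cO by blast
    then obtain y where yM: "y \<in> Mc c" and y0: "y \<noteq> 0" using zero by blast
    have e: "iota c y = iota a (phi c a y)" using i4[OF ca yM] by simp
    have "phi c a y \<in> Mc a" using ph[OF ca yM] .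
    then have "supp (iota a (phi c a y)) \<subseteq> S" using suppS Bspan by blast
    then have s1: "supp (iota c y) \<subseteq> S" using e by simp
    have s2: "\<forall>g \<in> supp (iota c y). deg g \<le> c" using i1[OF yM] unfolding free_comp_def supp_def by auto
    have "supp (iota c y) \<subseteq> Sc c" using s1 s2 unfolding Sc_def by blast
    then have fd: "iota c y \<in> free_comp G deg d" using i1[OF yM] dcb
      unfolding free_comp_def supp_def by auto
    have "y = phi d c (pi d (iota c y))" using p4[OF dc fd] p5[OF yM] by simp
    also have "pi d (iota c y) = 0" using p1[OF fd] Md by blast
    finally show False using phi0[OF dc] y0 by simp
  qed
  have "\<not> minimal_in Ob d" using anm dO dc ca by auto
  then obtain s where sO: "s \<in> Ob" and sd: "s < d" using dO unfolding minimal_in_def by blast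
  have sa: "s \<le> a" using sd dc ca by auto
  have sub1: "Sc s \<subseteq> Sc c" using sd dc unfolding Sc_def by auto
  have "card (Sc c) \<le> card (Sc s)" using cmin sO sa C_def by blast
  then have "Sc s = Sc c" using sub1 Scfin by (meson card_seteq)
  then have "\<forall>g \<in> Sc c. deg g \<le> s" unfolding Sc_def by auto
  then have "d \<le> s" unfolding d_def using Scfin Sc_ne[OF cO ca]
    by (auto intro!: Sup_fin.boundedI)
  then show False using sd by simp
qed

end
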